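(* Let $L$ be a torsion-free $d$-dimensional Lie algebra over $\mathbb{C}[\![t]\!]$ and $*\in\{\le,\triangleleft\}$. Assume $L$ has a basis $B=\{x_1,\ldots,x_d\}$ which is nice with respect to $*$ and simple. Then $$R_L^*(T)=\sum_{\mathbf{n}\in\mathcal{C}_B^*\cap\mathbb{Z}^d}T^{n_1+n_2+\cdots+n_d},$$ where $\mathcal{C}_B^{\triangleleft}=\{\mathbf{y}\in\mathbb{R}_{\ge0}^d: y_l\le y_i \text{ and } y_l\le y_j \text{ whenever } [x_i,x_j]=ax_l,\ a\ne0\}$ and $\mathcal{C}_B^{\le}=\{\mathbf{y}\in\mathbb{R}_{\ge0}^d: y_l\le y_i+y_j \text{ whenever } [x_i,x_j]=ax_l,\ a\ne0\}$.
   Context: Reduced zeta function: with $\chi$ the Euler characteristic on complex constructible sets (unique integer-valued function with $\chi(\mathbb{C}^m)=1$, additive on disjoint constructible sets, multiplicative along constructible maps with fibres of constant Euler characteristic), and $B_n^{\le}$ (resp. $B_n^{\triangleleft}$) the constructible subset of the Grassmannian $\mathrm{Gr}(L/t^nL)$ of $\mathbb{C}[\![t]\!]$-submodules of $L$ of $\mathbb{C}$-codimension $n$ that are subalgebras (resp. ideals), $R_L^*(T)=\sum_{n\ge0}\chi(B_n^* )T^n$. Let $v$ be the $t$-adic valuation on $\mathbb{C}[\![t]\!]$. Let $\mathcal{D}_B^*$ be the set of $\mathbf{n}\in\mathbb{Z}_{\ge0}^d$ such that the $\mathbb{C}[\![t]\!]$-span of $t^{n_1}x_1,\ldots,t^{n_d}x_d$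 is an ideal (if $*=\triangleleft$) or a subalgebra (if $*=\le$). The basis $B$ is nice with respect to $*$ if $R_L^*(T)=\sum_{\mathbf{n}\in\mathcal{D}_B^*}T^{n_1+\cdots+n_d}$. It is simple if for all $i,j$ there exist $l\in\{1,\ldots,d\}$ and $a\in\mathbb{C}[\![t]\!]$ with $[x_i,x_j]=ax_l$ and either $a=0$ or $v(a)=0$. *)

theory Defs
  imports "HOL-Computational_Algebra.Formal_Power_Series" Complex_Main
begin

text \<open>A torsion-free d-dimensional Lie algebra L over C[[t]] with basis x_0..x_(d-1) is
  represented by coordinates: elements are functions nat => complex fps vanishing at indices >= d,
  and the bracket is given by structure constants c i j k ([x_i,x_j] = sum_k c i j k x_k).\<close>

definition vecs :: "nat \<Rightarrow> (nat \<Rightarrow> complex fps) set" where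
  "vecs d = {u. \<forall>i\<ge>d. u i = 0}"

definition lie_br :: "nat \<Rightarrow> (nat \<Rightarrow> nat \<Rightarrow> nat \<Rightarrow> complex fps)
    \<Rightarrow> (nat \<Rightarrow> complex fps) \<Rightarrow> (nat \<Rightarrow> complex fps) \<Rightarrow> (nat \<Rightarrow> complex fps)" where
  "lie_br d c u v = (\<lambda>k. if k < d then (\<Sum>i<d. \<Sum>j<d. u i * v j * c i j k) else 0)"

definition basis_vec :: "nat \<Rightarrow> nat \<Rightarrow> complex fps" where
  "basis_vec i = (\<lambda>k. if k = i then 1 else 0)"

text \<open>Lie algebra axioms on the basis (alternating and Jacobi); bilinearity is built in.\<close>
definition lie_structure :: "nat \<Rightarrow> (nat \<Rightarrow> nat \<Rightarrow> nat \<Rightarrow> complex fps) \<Rightarrow> bool" where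
  "lie_structure d c \<longleftrightarrow>
     (\<forall>i<d. \<forall>k<d. c i i k = 0) \<and>
     (\<forall>i<d. \<forall>j<d. \<forall>k<d. c i j k = - c j i k) \<and>
     (\<forall>i<d. \<forall>j<d. \<forall>m<d. \<forall>k<d.
        (\<Sum>l<d. c j m l * c i l k + c m i l * c j l k + c i j l * c m l k) = 0)"

datatype kind = Subalg | Ideal

text \<open>The C[[t]]-span of t^(n_1) x_1, ..., t^(n_d) x_d.\<close>
definition span_mod :: "nat \<Rightarrow> (nat \<Rightarrow> nat) \<Rightarrow> (nat \<Rightarrow> complex fps) set" where
  "span_mod d n = {u \<in> vecs d. \<forall>i<d. fps_X ^ (n i) dvd u i}"

definition is_kind :: "kind \<Rightarrow> nat \<Rightarrow> (nat \<Rightarrow> nat \<Rightarrow> nat \<Rightarrow> complex fps)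
    \<Rightarrow> (nat \<Rightarrow> complex fps) set \<Rightarrow> bool" where
  "is_kind k d c M \<longleftrightarrow> (case k of
      Subalg \<Rightarrow> (\<forall>u\<in>M. \<forall>v\<in>M. lie_br d c u v \<in> M)
    | Ideal \<Rightarrow> (\<forall>u\<in>vecs d. \<forall>v\<in>M. lie_br d c u v \<in> M))"

definition D_set :: "kind \<Rightarrow> nat \<Rightarrow> (nat \<Rightarrow> nat \<Rightarrow> nat \<Rightarrow> complex fps) \<Rightarrow> (nat \<Rightarrow> nat) set" where
  "D_set k d c = {n. (\<forall>i\<ge>d. n i = 0) \<and> is_kind k d c (span_mod d n)}"

definition br_is :: "nat \<Rightarrow> (nat \<Rightarrow> nat \<Rightarrow> nat \<Rightarrow> complex fps) \<Rightarrow> nat \<Rightarrow> nat \<Rightarrow> complex fps \<Rightarrow> nat \<Rightarrow> bool" where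
  "br_is d c i j a l \<longleftrightarrow> lie_br d c (basis_vec i) (basis_vec j) = (\<lambda>k. if k = l then a else 0)"

definition simple_basis :: "nat \<Rightarrow> (nat \<Rightarrow> nat \<Rightarrow> nat \<Rightarrow> complex fps) \<Rightarrow> bool" where
  "simple_basis d c \<longleftrightarrow> (\<forall>i<d. \<forall>j<d. \<exists>l<d. \<exists>a.
      br_is d c i j a l \<and> (a = 0 \<or> subdegree a = 0))"

definition C_cone :: "kind \<Rightarrow> nat \<Rightarrow> (nat \<Rightarrow> nat \<Rightarrow> nat \<Rightarrow> complex fps) \<Rightarrow> (nat \<Rightarrow> real) set" where
  "C_cone k d c = {y. (\<forall>i\<ge>d. y i = 0) \<and> (\<forall>i<d. y i \<ge> 0) \<and>
     (\<forall>i<d. \<forall>j<d. \<forall>l<d. \<forall>a. br_is d c i j a l \<and> a \<noteq> 0 \<longrightarrow>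
        (case k of Ideal \<Rightarrow> y l \<le> y i \<and> y l \<le> y j
                 | Subalg \<Rightarrow> y l \<le> y i + y j))}"

text \<open>Integer points of the cone (they are nonnegative, hence nat-valued).\<close>
definition C_int :: "kind \<Rightarrow> nat \<Rightarrow> (nat \<Rightarrow> nat \<Rightarrow> nat \<Rightarrow> complex fps) \<Rightarrow> (nat \<Rightarrow> nat) set" where
  "C_int k d c = {n. (\<forall>i\<ge>d. n i = 0) \<and> (\<lambda>i. real (n i)) \<in> C_cone k d c}"

definition gen_fun :: "nat \<Rightarrow> (nat \<Rightarrow> nat) set \<Rightarrow> int fps" where
  "gen_fun d S = Abs_fps (\<lambda>m. int (card {n \<in> S. (\<Sum>i<d. n i) = m}))"

definition nice_basis :: "kind \<Rightarrow> nat \<Rightarrow> (nat \<Rightarrow> nat \<Rightarrow> nat \<Rightarrow> complex fps) \<Rightarrow> int fps \<Rightarrow> bool" where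
  "nice_basis k d c R \<longleftrightarrow> R = gen_fun d (D_set k d c)"

end

theory Submission
  imports Defs
begin

lemma dsum:
  fixes f :: "nat \<Rightarrow> nat \<Rightarrow> 'a::comm_ring_1"
  assumes "i < d" "j < d"
  shows "(\<Sum>ia<d. \<Sum>ja<d. (if ia = i then a else 0) * (if ja = j then b else 0) * f ia ja) = a * b * f i j"
proof -
  have e: "\<And>ia ja. (if ia = i then a else 0) * (if ja = j then b else 0) * f ia ja
     = (if ja = j then (if ia = i then a * b * f ia ja else 0) else 0)" by simp
  have e2: "\<And>ia. (\<Sum>ja<d. (if ja = j then (if ia = i then a * b * f ia ja else 0) else 0))
     = (if ia = i then a * b * f ia j else 0)" using assms by (simp only: sum.delta finite_lessThan lessThan_iff if_True)
  show ?thesis using assms by (simp only: e e2 sum.delta finite_lessThan lessThan_iff if_True)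
qed

lemma br_coef:
  assumes "br_is d c i j a l" "k < d" "i < d" "j < d"
  shows "c i j k = (if k = l then a else 0)"
proof -
  have "lie_br d c (basis_vec i) (basis_vec j) k = (if k = l then a else 0)"
    using assms(1) unfolding br_is_def by simp
  moreover have "lie_br d c (basis_vec i) (basis_vec j) k = c i j k"
    using assms(2-4) dsum[OF assms(3,4), of 1 1 "\<lambda>ia ja. c ia ja k"] by (simp add: lie_br_def basis_vec_def)
  ultimately show ?thesis by simp
qed

lemma br_unit:
  assumes "simple_basis d c" "br_is d c i j a l" "a \<noteq> 0" "i < d" "j < d" "l < d"
  shows "subdegree a = 0"
proof -
  obtain l' a' where l': "l' < d" "br_is d c i j a' l'" "a' = 0 \<or> subdegree a' = 0"
    using assms(1,4,5) unfolding simple_basis_def by blast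
  have "c i j l = a" using br_coef[OF assms(2) assms(6) assms(4,5)] by simp
  moreover have "c i j l = (if l = l' then a' else 0)" using br_coef[OF l'(2) assms(6) assms(4,5)] .
  ultimately show ?thesis using l'(3) assms(3) by (auto split: if_splits)
qed

lemma coef_nonzero:
  assumes "simple_basis d c" "i < d" "j < d" "k < d" "c i j k \<noteq> 0"
  shows "br_is d c i j (c i j k) k"
proof -
  obtain l' a' where l': "l' < d" "br_is d c i j a' l'"
    using assms(1,2,3) unfolding simple_basis_def by blast
  have "c i j k = (if k = l' then a' else 0)" using br_coef[OF l'(2) assms(4) assms(2,3)] .
  with assms(5) l' show ?thesis by (auto split: if_splits)
qed

definition mv :: "nat \<Rightarrow> nat \<Rightarrow> nat \<Rightarrow> complex fps" where
  "mv i m = (\<lambda>k. if k = i then fps_X ^ m else 0)"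

lemma mv_br:
  assumes "i < d" "j < d" "l < d"
  shows "lie_br d c (mv i p) (mv j q) l = fps_X ^ p * fps_X ^ q * c i j l"
  using assms dsum[OF assms(1,2), of "fps_X ^ p" "fps_X ^ q" "\<lambda>ia ja. c ia ja l"] by (simp add: lie_br_def mv_def)

lemma mv_span:
  assumes "i < d" shows "mv i (n i) \<in> span_mod d n"
  using assms by (auto simp: span_mod_def vecs_def mv_def)

lemma mv_vecs:
  assumes "i < d" shows "mv i 0 \<in> vecs d"
  using assms by (auto simp: vecs_def mv_def)

lemma X_dvd_le:
  fixes a :: "complex fps"
  assumes "fps_X ^ m dvd fps_X ^ p * a" "a \<noteq> 0" "subdegree a = 0"
  shows "m \<le> p"
proof -
  have "fps_X ^ p * a \<noteq> 0" using assms(2) by simp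
  from dvd_imp_subdegree_le[OF assms(1) this] assms(2,3) show ?thesis
    by (simp add: subdegree_mult)
qed

lemma lie_br_vecs: "lie_br d c u v \<in> vecs d"
  by (simp add: lie_br_def vecs_def)

lemma sum_dvd2:
  fixes f :: "nat \<Rightarrow> nat \<Rightarrow> complex fps"
  assumes "\<And>i j. i < d \<Longrightarrow> j < d \<Longrightarrow> x dvd f i j"
  shows "x dvd (\<Sum>i<d. \<Sum>j<d. f i j)"
  using assms by (intro dvd_sum) auto

lemma sets_eq:
  assumes lie: "lie_structure d c" and simp: "simple_basis d c"
  shows "D_set k d c = C_int k d c"
proof (intro set_eqI iffI)
  fix n assume "n \<in> D_set k d c"
  hence n0: "\<forall>i\<ge>d. n i = 0" and K: "is_kind k d c (span_mod d n)" by (auto simp: D_set_def)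
  have "\<forall>i<d. \<forall>j<d. \<forall>l<d. \<forall>a. br_is d c i j a l \<and> a \<noteq> 0 \<longrightarrow>
        (case k of Ideal \<Rightarrow> real (n l) \<le> real (n i) \<and> real (n l) \<le> real (n j)
                 | Subalg \<Rightarrow> real (n l) \<le> real (n i) + real (n j))"
  proof (intro allI impI, elim conjE)
    fix i j l a assume ij: "i < d" "j < d" "l < d" and br: "br_is d c i j a l" and a: "a \<noteq> 0"
    have u: "subdegree a = 0" using br_unit[OF simp br a ij(1,2,3)] .
    have cl: "c i j l = a" using br_coef[OF br ij(3) ij(1,2)] by simp
    show "case k of Ideal \<Rightarrow> real (n l) \<le> real (n i) \<and> real (n l) \<le> real (n j)
                 | Subalg \<Rightarrow> real (n l) \<le> real (n i) + real (n j)"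
    proof (cases k)
      case Subalg
      with K have "lie_br d c (mv i (n i)) (mv j (n j)) \<in> span_mod d n"
        using mv_span ij by (auto simp: is_kind_def)
      hence "fps_X ^ n l dvd fps_X ^ (n i + n j) * a"
        using ij cl by (auto simp: span_mod_def mv_br power_add)
      hence "n l \<le> n i + n j" using X_dvd_le a u by blast
      thus ?thesis using Subalg by simp
    next
      case Ideal
      with K have "lie_br d c (mv i 0) (mv j (n j)) \<in> span_mod d n"
        using mv_span mv_vecs ij by (auto simp: is_kind_def)
      hence "fps_X ^ n l dvd fps_X ^ (n j) * a"
        using ij cl by (auto simp: span_mod_def mv_br)
      hence 1: "n l \<le> n j" using X_dvd_le a u by blast
      have "c j i l = - c i j l" using lie ij unfolding lie_structure_def by blast
      hence cl2: "c j i l = - a" using cl by simp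
      from Ideal K have "lie_br d c (mv j 0) (mv i (n i)) \<in> span_mod d n"
        using mv_span mv_vecs ij by (auto simp: is_kind_def)
      hence "fps_X ^ n l dvd fps_X ^ (n i) * (- a)"
        using ij cl2 by (auto simp: span_mod_def mv_br)
      hence 2: "n l \<le> n i" using X_dvd_le[of "n l" "n i" "-a"] a u by simp
      show ?thesis using Ideal 1 2 by simp
    qed
  qed
  thus "n \<in> C_int k d c" using n0 by (auto simp: C_int_def C_cone_def)
next
  fix n assume "n \<in> C_int k d c"
  hence n0: "\<forall>i\<ge>d. n i = 0" and
    C: "\<And>i j l a. i < d \<Longrightarrow> j < d \<Longrightarrow> l < d \<Longrightarrow> br_is d c i j a l \<Longrightarrow> a \<noteq> 0 \<Longrightarrow>
        (case k of Ideal \<Rightarrow> real (n l) \<le> real (n i) \<and> real (n l) \<le> real (n j)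
                 | Subalg \<Rightarrow> real (n l) \<le> real (n i) + real (n j))"
  proof -
    show "\<forall>i\<ge>d. n i = 0" using \<open>n \<in> C_int k d c\<close> by (simp add: C_int_def)
    have "(\<lambda>i. real (n i)) \<in> C_cone k d c" using \<open>n \<in> C_int k d c\<close> by (simp add: C_int_def)
    hence H: "\<forall>i<d. \<forall>j<d. \<forall>l<d. \<forall>a. br_is d c i j a l \<and> a \<noteq> 0 \<longrightarrow>
        (case k of Ideal \<Rightarrow> real (n l) \<le> real (n i) \<and> real (n l) \<le> real (n j)
                 | Subalg \<Rightarrow> real (n l) \<le> real (n i) + real (n j))"
      unfolding C_cone_def mem_Collect_eq by (elim conjE)
    show "\<And>i j l a. i < d \<Longrightarrow> j < d \<Longrightarrow> l < d \<Longrightarrow> br_is d c i j a l \<Longrightarrow> a \<noteq> 0 \<Longrightarrow>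
        (case k of Ideal \<Rightarrow> real (n l) \<le> real (n i) \<and> real (n l) \<le> real (n j)
                 | Subalg \<Rightarrow> real (n l) \<le> real (n i) + real (n j))"
      using H by blast
  qed
  have key: "fps_X ^ n l dvd u i * v j * c i j l"
    if ij: "i < d" "j < d" "l < d" and ui: "fps_X ^ p dvd u i" and vj: "fps_X ^ q dvd v j"
      and ineq: "c i j l \<noteq> 0 \<Longrightarrow> n l \<le> p + q"
    for u v :: "nat \<Rightarrow> complex fps" and i j l p q
  proof (cases "c i j l = 0")
    case False
    have "fps_X ^ (p + q) dvd u i * v j" using ui vj by (simp add: power_add mult_dvd_mono)
    moreover have "fps_X ^ n l dvd (fps_X ^ (p + q) :: complex fps)"
      using ineq[OF False] by (simp add: le_imp_power_dvd)
    ultimately show ?thesis by (meson dvd_trans dvd_mult2)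
  qed simp
  have "is_kind k d c (span_mod d n)"
  proof (cases k)
    case Subalg
    { fix u v assume u: "u \<in> span_mod d n" and v: "v \<in> span_mod d n"
      have "\<forall>l<d. fps_X ^ n l dvd lie_br d c u v l"
      proof (intro allI impI)
        fix l assume l: "l < d"
        have "fps_X ^ n l dvd (\<Sum>i<d. \<Sum>j<d. u i * v j * c i j l)"
        proof (rule sum_dvd2)
          fix i j assume ij: "i < d" "j < d"
          show "fps_X ^ n l dvd u i * v j * c i j l"
          proof (rule key[OF ij l])
            show "fps_X ^ n i dvd u i" using u ij by (auto simp: span_mod_def)
            show "fps_X ^ n j dvd v j" using v ij by (auto simp: span_mod_def)
            assume "c i j l \<noteq> 0"
            from C[OF ij l coef_nonzero[OF simp ij l this] this] Subalg
            show "n l \<le> n i + n j" by simp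
          qed
        qed
        thus "fps_X ^ n l dvd lie_br d c u v l" using l by (simp add: lie_br_def)
      qed
      hence "lie_br d c u v \<in> span_mod d n" using lie_br_vecs by (auto simp: span_mod_def) }
    thus ?thesis using Subalg by (simp add: is_kind_def)
  next
    case Ideal
    { fix u v assume u: "u \<in> vecs d" and v: "v \<in> span_mod d n"
      have "\<forall>l<d. fps_X ^ n l dvd lie_br d c u v l"
      proof (intro allI impI)
        fix l assume l: "l < d"
        have "fps_X ^ n l dvd (\<Sum>i<d. \<Sum>j<d. u i * v j * c i j l)"
        proof (rule sum_dvd2)
          fix i j assume ij: "i < d" "j < d"
          show "fps_X ^ n l dvd u i * v j * c i j l"
          proof (rule key[OF ij l])
            show "fps_X ^ 0 dvd u i" by simp
            show "fps_X ^ n j dvd v j" using v ij by (auto simp: span_mod_def)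
            assume "c i j l \<noteq> 0"
            from C[OF ij l coef_nonzero[OF simp ij l this] this] Ideal
            show "n l \<le> 0 + n j" by simp
          qed
        qed
        thus "fps_X ^ n l dvd lie_br d c u v l" using l by (simp add: lie_br_def)
      qed
      hence "lie_br d c u v \<in> span_mod d n" using lie_br_vecs by (auto simp: span_mod_def) }
    thus ?thesis using Ideal by (simp add: is_kind_def)
  qed
  thus "n \<in> D_set k d c" using n0 by (simp add: D_set_def)
qed

theorem proposition4p1:
  fixes d :: nat and c :: "nat \<Rightarrow> nat \<Rightarrow> nat \<Rightarrow> complex fps"
    and k :: kind and R :: "int fps"
  assumes "lie_structure d c"
    and "nice_basis k d c R"
    and "simple_basis d c"
  shows "R = gen_fun d (C_int k d c)"
  using assms sets_eq[OF assms(1,3)] by (simp add: nice_basis_def)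

end
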